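(* Let $\mathcal{A}=(T(\Sigma,X),\Rightarrow_\Pi)$ be an abstract reduction system closed under substitutions, and let $(u_1\Rightarrow_{w_1}v_1,\ u_2\Rightarrow_{w_2}v_2)$ be a recurrent pair in $\mathcal{A}$, with $c_1,c_2,x,y,s,t,n_1,n_2,n_3,n_4$ as in the definition of recurrent pair. Then for all $m,n\in\mathbb{N}$ with $n\ge n_2$, the term $c_1[m,n]$ starts an infinite $(\Rightarrow_{w_1}^{*}\circ\Rightarrow_{w_2})$-chain, i.e. there is an infinite sequence $a_0=c_1[m,n],a_1,a_2,\dots$ of terms with $a_k\ (\Rightarrow_{w_1}^{*}\circ\Rightarrow_{w_2})\ a_{k+1}$ for all $k\in\mathbb{N}$.
   Context: Fix a signature $\Sigma$, a countably infinite set $X$ of variables disjoint from $\Sigma$, and two distinct fresh hole constants $\square,\square'\notin\Sigma\cup X$. Terms are elements of $T(\Sigma,X)$; substitutions $\theta$ (maps $X\to T(\Sigma,X)$ moving finitely many variables) act homomorphically; $\mathit{Var}$ denotes the variable set. An abstract reduction system $(A,\Rightarrow_\Pi)$ has $\Rightarrow_\Pi=\bigcup_{\pi\in\Pi}\Rightarrow_\pi$; for $w=\langle\pi_1,\dots,\pi_k\rangle\in\Pi^*$, $\Rightarrow_w=\Rightarrow_{\pi_1}\circ\cdots\circ\Rightarrow_{\pi_k}$ ($\Rightarrow_\epsilon$ the identity), where $\phi\circ\varphi=\{(a,a'')\mid\exists a_1,(a,a_1)\in\phi,(a_1,a'')\in\varphi\}$; $\Rightarrow_w^*$ is the reflexive-transitive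 closure of $\Rightarrow_w$. It is closed under substitutions if for all $s,t\in A$, $w\in\Pi^*$ and substitutions $\theta$, $s\Rightarrow_w t$ implies $s\theta\Rightarrow_w t\theta$. Let $c_1$ be a term over $\Sigma\cup\{\square,\square'\}$ and $X$ containing at least one occurrence of $\square$ and of $\square'$, and $c_1[t,t']$ the result of replacing all $\square$ by $t$ and all $\square'$ by $t'$. Let $c_2$ be a term over $\Sigma\cup\{\square\}$ and $X$ containing at least one $\square$ (and no $\square'$), $c_2[t]$ the result of replacing all $\square$ by $t$, $c_2^0[t]=t$, $c_2^{k+1}[t]=c_2[c_2^k[t]]$. A recurrent pair in $\mathcal{A}$ is a pair of chains $u_1\Rightarrow_{w_1}v_1$ and $u_2\Rightarrow_{w_2}v_2$ ($w_1,w_2\in\Pi^*$) such that: $u_1=c_1[x,c_2[y]]$, $v_1=c_1[c_2^{n_1}[x],y]$, $u_2=c_1[x,c_2^{n_2}[s]]$, $v_2=c_1[c_2^{n_3}[t],c_2^{n_4}[x]]$ for variables $x\neq y$ with $\{x,y\}\cap\mathit{Var}(c_1)=\emptyset$, a term $s$, naturals $n_1,n_2,n_3,n_4$; $\mathit{Var}(c_2)=\mathit{Var}(s)=\emptyset$; $t\in\{x,s\}$; and $n_4\ge n_2$. For $m,n\in\mathbb{N}$, $c_1[m,n]$ denotes the term $c_1[c_2^m[s],c_2^n[s]]$. *)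

theory Defs
  imports Main "HOL-Library.Countable_Set"
begin

datatype ('f, 'v) "term" = Var 'v | Fun 'f "('f, 'v) term list"

fun vars_term :: "('f, 'v) term \<Rightarrow> 'v set" where
  "vars_term (Var x) = {x}"
| "vars_term (Fun f ts) = (\<Union>t \<in> set ts. vars_term t)"

fun subst_apply :: "('f, 'v) term \<Rightarrow> ('v \<Rightarrow> ('f, 'v) term) \<Rightarrow> ('f, 'v) term" where
  "subst_apply (Var x) \<theta> = \<theta> x"
| "subst_apply (Fun f ts) \<theta> = Fun f (map (\<lambda>t. subst_apply t \<theta>) ts)"

definition is_subst :: "('v \<Rightarrow> ('f, 'v) term) \<Rightarrow> bool" where
  "is_subst \<theta> \<longleftrightarrow> finite {x. \<theta> x \<noteq> Var x}"

(* Terms over Sigma \<union> {hole, hole'} and X: two distinct fresh hole constants *)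
datatype ('f, 'v) ctxt = CVar 'v | CFun 'f "('f, 'v) ctxt list" | Hole | Hole'

fun vars_ctxt :: "('f, 'v) ctxt \<Rightarrow> 'v set" where
  "vars_ctxt (CVar x) = {x}"
| "vars_ctxt (CFun f cs) = (\<Union>c \<in> set cs. vars_ctxt c)"
| "vars_ctxt Hole = {}"
| "vars_ctxt Hole' = {}"

fun has_hole :: "('f, 'v) ctxt \<Rightarrow> bool" where
  "has_hole (CVar x) = False"
| "has_hole (CFun f cs) = (\<exists>c \<in> set cs. has_hole c)"
| "has_hole Hole = True"
| "has_hole Hole' = False"

fun has_hole' :: "('f, 'v) ctxt \<Rightarrow> bool" where
  "has_hole' (CVar x) = False"
| "has_hole' (CFun f cs) = (\<exists>c \<in> set cs. has_hole' c)"
| "has_hole' Hole = False"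
| "has_hole' Hole' = True"

fun fill2 :: "('f, 'v) ctxt \<Rightarrow> ('f, 'v) term \<Rightarrow> ('f, 'v) term \<Rightarrow> ('f, 'v) term" where
  "fill2 (CVar x) t t' = Var x"
| "fill2 (CFun f cs) t t' = Fun f (map (\<lambda>c. fill2 c t t') cs)"
| "fill2 Hole t t' = t"
| "fill2 Hole' t t' = t'"

definition fill1 :: "('f, 'v) ctxt \<Rightarrow> ('f, 'v) term \<Rightarrow> ('f, 'v) term" where
  "fill1 c t = fill2 c t t"

fun fill_pow :: "('f, 'v) ctxt \<Rightarrow> nat \<Rightarrow> ('f, 'v) term \<Rightarrow> ('f, 'v) term" where
  "fill_pow c 0 t = t"
| "fill_pow c (Suc k) t = fill1 c (fill_pow c k t)"

(* Abstract reduction system (T(Sigma,X), \<Rightarrow>_Pi) given by R :: 'p \<Rightarrow> relation, Pi = UNIV :: 'p set.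
   \<Rightarrow>_w for a word w = <pi_1,...,pi_k> *)
fun rel_word :: "('p \<Rightarrow> (('f, 'v) term \<times> ('f, 'v) term) set) \<Rightarrow> 'p list
                   \<Rightarrow> (('f, 'v) term \<times> ('f, 'v) term) set" where
  "rel_word R [] = Id"
| "rel_word R (p # w) = R p O rel_word R w"

definition closed_under_subst :: "('p \<Rightarrow> (('f, 'v) term \<times> ('f, 'v) term) set) \<Rightarrow> bool" where
  "closed_under_subst R \<longleftrightarrow>
     (\<forall>s t w \<theta>. is_subst \<theta> \<longrightarrow> (s, t) \<in> rel_word R w \<longrightarrow>
        (subst_apply s \<theta>, subst_apply t \<theta>) \<in> rel_word R w)"

definition recurrent_pair ::
  "('p \<Rightarrow> (('f, 'v) term \<times> ('f, 'v) term) set) \<Rightarrow> 'p list \<Rightarrow> 'p list \<Rightarrow>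
   ('f, 'v) ctxt \<Rightarrow> ('f, 'v) ctxt \<Rightarrow> 'v \<Rightarrow> 'v \<Rightarrow> ('f, 'v) term \<Rightarrow> ('f, 'v) term \<Rightarrow>
   nat \<Rightarrow> nat \<Rightarrow> nat \<Rightarrow> nat \<Rightarrow> bool" where
  "recurrent_pair R w1 w2 c1 c2 x y s t n1 n2 n3 n4 \<longleftrightarrow>
     has_hole c1 \<and> has_hole' c1 \<and> has_hole c2 \<and> \<not> has_hole' c2 \<and>
     x \<noteq> y \<and> x \<notin> vars_ctxt c1 \<and> y \<notin> vars_ctxt c1 \<and>
     vars_ctxt c2 = {} \<and> vars_term s = {} \<and> t \<in> {Var x, s} \<and> n4 \<ge> n2 \<and>
     (fill2 c1 (Var x) (fill1 c2 (Var y)), fill2 c1 (fill_pow c2 n1 (Var x)) (Var y))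
        \<in> rel_word R w1 \<and>
     (fill2 c1 (Var x) (fill_pow c2 n2 s), fill2 c1 (fill_pow c2 n3 t) (fill_pow c2 n4 (Var x)))
        \<in> rel_word R w2"

definition c1_mn :: "('f, 'v) ctxt \<Rightarrow> ('f, 'v) ctxt \<Rightarrow> ('f, 'v) term \<Rightarrow> nat \<Rightarrow> nat \<Rightarrow> ('f, 'v) term" where
  "c1_mn c1 c2 s m n = fill2 c1 (fill_pow c2 m s) (fill_pow c2 n s)"

end

theory Submission
  imports Defs
begin

lemma subst_ground: "vars_term s = {} \<Longrightarrow> subst_apply s \<theta> = s"
proof (induction s)
  case (Var x) then show ?case by simp
next
  case (Fun f ts) then show ?case by (simp add: map_idI)
qed

lemma subst_fill2:
  "(\<forall>z\<in>vars_ctxt c. \<theta> z = Var z) \<Longrightarrow>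
   subst_apply (fill2 c u v) \<theta> = fill2 c (subst_apply u \<theta>) (subst_apply v \<theta>)"
  by (induction c) auto

lemma subst_fill_pow:
  "vars_ctxt c = {} \<Longrightarrow> subst_apply (fill_pow c k u) \<theta> = fill_pow c k (subst_apply u \<theta>)"
  by (induction k) (auto simp: fill1_def subst_fill2)

lemma fill_pow_add: "fill_pow c (a + b) u = fill_pow c a (fill_pow c b u)"
  by (induction a) auto

lemma is_subst2: "is_subst ((Var(x := A))(y := B))"
proof -
  have "{z. ((Var(x := A))(y := B)) z \<noteq> Var z} \<subseteq> {x, y}" by auto
  then show ?thesis unfolding is_subst_def by (rule finite_subset) simp
qed

lemma is_subst1: "is_subst (Var(x := A))"
proof -
  have "{z. (Var(x := A)) z \<noteq> Var z} \<subseteq> {x}" by auto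
  then show ?thesis unfolding is_subst_def by (rule finite_subset) simp
qed

locale rp =
  fixes R :: "'p \<Rightarrow> (('f, 'v) term \<times> ('f, 'v) term) set"
    and w1 w2 :: "'p list"
    and c1 c2 :: "('f, 'v) ctxt"
    and x y :: 'v
    and s t :: "('f, 'v) term"
    and n1 n2 n3 n4 :: nat
  assumes cl: "closed_under_subst R"
    and rp: "recurrent_pair R w1 w2 c1 c2 x y s t n1 n2 n3 n4"
begin

lemma step1:
  assumes "n > 0"
  shows "(c1_mn c1 c2 s m n, c1_mn c1 c2 s (n1 + m) (n - 1)) \<in> rel_word R w1"
proof -
  define \<theta> where "\<theta> = (Var(x := fill_pow c2 m s))(y := fill_pow c2 (n - 1) s)"
  have R1: "(fill2 c1 (Var x) (fill1 c2 (Var y)), fill2 c1 (fill_pow c2 n1 (Var x)) (Var y))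
        \<in> rel_word R w1" and h: "x \<notin> vars_ctxt c1" "y \<notin> vars_ctxt c1" "vars_ctxt c2 = {}"
    "vars_term s = {}" "x \<noteq> y"
    using rp unfolding recurrent_pair_def by auto
  have c1v: "\<forall>z\<in>vars_ctxt c1. \<theta> z = Var z" using h unfolding \<theta>_def by auto
  have tx: "\<theta> x = fill_pow c2 m s" and ty: "\<theta> y = fill_pow c2 (n - 1) s"
    using h unfolding \<theta>_def by auto
  from cl R1 have "(subst_apply (fill2 c1 (Var x) (fill1 c2 (Var y))) \<theta>,
     subst_apply (fill2 c1 (fill_pow c2 n1 (Var x)) (Var y)) \<theta>) \<in> rel_word R w1"
    unfolding closed_under_subst_def using is_subst2[of x _ y] unfolding \<theta>_def by blast
  moreover have "subst_apply (fill2 c1 (Var x) (fill1 c2 (Var y))) \<theta> = c1_mn c1 c2 s m n"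
  proof -
    have "fill1 c2 (fill_pow c2 (n - 1) s) = fill_pow c2 n s"
      using assms by (cases n) auto
    then show ?thesis
      using subst_fill2[OF c1v] subst_fill2[of c2 \<theta>] h tx ty
      unfolding c1_mn_def fill1_def by simp
  qed
  moreover have "subst_apply (fill2 c1 (fill_pow c2 n1 (Var x)) (Var y)) \<theta>
      = c1_mn c1 c2 s (n1 + m) (n - 1)"
    using subst_fill2[OF c1v] subst_fill_pow[OF h(3)] h tx ty
    unfolding c1_mn_def by (simp add: fill_pow_add)
  ultimately show ?thesis by simp
qed

lemma iter1:
  "k \<le> n \<Longrightarrow> (c1_mn c1 c2 s m n, c1_mn c1 c2 s (n1 * k + m) (n - k)) \<in> (rel_word R w1)\<^sup>*"
proof (induction k)
  case 0 then show ?case by simp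
next
  case (Suc k)
  then have a: "(c1_mn c1 c2 s m n, c1_mn c1 c2 s (n1 * k + m) (n - k)) \<in> (rel_word R w1)\<^sup>*"
    by simp
  have "n - k > 0" using Suc by simp
  from step1[OF this, of "n1 * k + m"]
  have "(c1_mn c1 c2 s (n1 * k + m) (n - k), c1_mn c1 c2 s (n1 * Suc k + m) (n - Suc k))
     \<in> rel_word R w1" by (simp add: add.assoc)
  with a show ?case by (rule rtrancl_into_rtrancl)
qed

lemma step2:
  "\<exists>M'. (c1_mn c1 c2 s M n2, c1_mn c1 c2 s M' (n4 + M)) \<in> rel_word R w2"
proof -
  define \<theta> where "\<theta> = Var(x := fill_pow c2 M s)"
  have R2: "(fill2 c1 (Var x) (fill_pow c2 n2 s), fill2 c1 (fill_pow c2 n3 t) (fill_pow c2 n4 (Var x)))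
        \<in> rel_word R w2" and h: "x \<notin> vars_ctxt c1" "vars_ctxt c2 = {}"
    "vars_term s = {}" "t \<in> {Var x, s}"
    using rp unfolding recurrent_pair_def by auto
  have c1v: "\<forall>z\<in>vars_ctxt c1. \<theta> z = Var z" using h unfolding \<theta>_def by auto
  have tx: "\<theta> x = fill_pow c2 M s" unfolding \<theta>_def by simp
  from cl R2 have "(subst_apply (fill2 c1 (Var x) (fill_pow c2 n2 s)) \<theta>,
     subst_apply (fill2 c1 (fill_pow c2 n3 t) (fill_pow c2 n4 (Var x))) \<theta>) \<in> rel_word R w2"
    unfolding closed_under_subst_def using is_subst1[of x] unfolding \<theta>_def by blast
  moreover have "subst_apply (fill2 c1 (Var x) (fill_pow c2 n2 s)) \<theta> = c1_mn c1 c2 s M n2"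
    using subst_fill2[OF c1v] subst_fill_pow[OF h(2)] subst_ground[OF h(3)] tx
    unfolding c1_mn_def by simp
  moreover have "subst_apply (fill2 c1 (fill_pow c2 n3 t) (fill_pow c2 n4 (Var x))) \<theta>
     = c1_mn c1 c2 s (if t = Var x then n3 + M else n3) (n4 + M)"
    using subst_fill2[OF c1v] subst_fill_pow[OF h(2)] subst_ground[OF h(3)] h(4) tx
    unfolding c1_mn_def by (auto simp: fill_pow_add)
  ultimately show ?thesis by metis
qed

definition P where "P a \<longleftrightarrow> (\<exists>m n. n \<ge> n2 \<and> a = c1_mn c1 c2 s m n)"

lemma stepP: "P a \<Longrightarrow> \<exists>b. P b \<and> (a, b) \<in> (rel_word R w1)\<^sup>* O rel_word R w2"
proof -
  assume "P a"
  then obtain m n where n: "n \<ge> n2" and a: "a = c1_mn c1 c2 s m n" unfolding P_def by blast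
  have 1: "(a, c1_mn c1 c2 s (n1 * (n - n2) + m) n2) \<in> (rel_word R w1)\<^sup>*"
    using iter1[of "n - n2" n m] n a by simp
  obtain M' where 2: "(c1_mn c1 c2 s (n1 * (n - n2) + m) n2,
      c1_mn c1 c2 s M' (n4 + (n1 * (n - n2) + m))) \<in> rel_word R w2"
    using step2 by blast
  have "n4 \<ge> n2" using rp unfolding recurrent_pair_def by auto
  then have "n2 \<le> n4 + (n1 * (n - n2) + m)" by simp
  then have "P (c1_mn c1 c2 s M' (n4 + (n1 * (n - n2) + m)))" unfolding P_def by blast
  with 1 2 show ?thesis by blast
qed

lemma chain:
  assumes "n \<ge> n2"
  shows "\<exists>a :: nat \<Rightarrow> ('f, 'v) term. a 0 = c1_mn c1 c2 s m n \<and>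
           (\<forall>k. (a k, a (Suc k)) \<in> (rel_word R w1)\<^sup>* O rel_word R w2)"
proof -
  obtain f where f: "\<And>a. P a \<Longrightarrow> P (f a) \<and> (a, f a) \<in> (rel_word R w1)\<^sup>* O rel_word R w2"
    using stepP by metis
  define a where "a k = (f ^^ k) (c1_mn c1 c2 s m n)" for k
  have Pa: "P (a k)" for k
  proof (induction k)
    case 0 then show ?case using assms unfolding a_def P_def by auto
  next
    case (Suc k) then show ?case using f unfolding a_def by simp
  qed
  have "(a k, a (Suc k)) \<in> (rel_word R w1)\<^sup>* O rel_word R w2" for k
    using f[OF Pa[of k]] unfolding a_def by simp
  moreover have "a 0 = c1_mn c1 c2 s m n" unfolding a_def by simp
  ultimately show ?thesis by blast
qed

end

theorem corollary13:
  fixes R :: "'p \<Rightarrow> (('f, 'v) term \<times> ('f, 'v) term) set"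
    and w1 w2 :: "'p list"
    and c1 c2 :: "('f, 'v) ctxt"
    and x y :: 'v
    and s t :: "('f, 'v) term"
    and n1 n2 n3 n4 m n :: nat
  assumes "countable (UNIV :: 'v set)" and "infinite (UNIV :: 'v set)"
    and "closed_under_subst R"
    and "recurrent_pair R w1 w2 c1 c2 x y s t n1 n2 n3 n4"
    and "n \<ge> n2"
  shows "\<exists>a :: nat \<Rightarrow> ('f, 'v) term. a 0 = c1_mn c1 c2 s m n \<and>
           (\<forall>k. (a k, a (Suc k)) \<in> (rel_word R w1)\<^sup>* O rel_word R w2)"
proof -
  interpret rp R w1 w2 c1 c2 x y s t n1 n2 n3 n4
    using assms(3,4) by unfold_locales
  show ?thesis using chain[OF assms(5)] .
qed

end
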